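(* Let $G$ be a cubic graph and let $J_1,J_2,J_3$ be three joins of $G$. For $i\in\{0,1,2,3\}$ let $E_i$ be the set of edges of $G$ contained in precisely $i$ of the sets $J_1,J_2,J_3$, and let $G_c=G[E_0\cup E_2\cup E_3]$ be the weak core of $G$ with respect to $J_1,J_2,J_3$. Then $G[E_0\cup E_2]$ is either an empty graph or a cycle.
   Context: A join of a graph $H$ is a set $J\subseteq E(H)$ such that every vertex has degree of the same parity in $H$ and in the spanning subgraph $(V(H),J)$. For $X\subseteq E(G)$, $G[X]$ denotes the subgraph induced by the edge set $X$. A cycle is a graph in which every vertex has even degree (equivalently, here, a union of edge-disjoint circuits). *)

theory Defs
  imports Main
begin

text \<open>Finite multigraphs (parallel edges and loops allowed).
  A loop (one end vertex) contributes 2 to the degree.\<close>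

definition multigraph :: "'v set \<Rightarrow> 'e set \<Rightarrow> ('e \<Rightarrow> 'v set) \<Rightarrow> bool" where
  "multigraph V E inc \<longleftrightarrow> finite V \<and> finite E \<and>
     (\<forall>e\<in>E. inc e \<subseteq> V \<and> (card (inc e) = 1 \<or> card (inc e) = 2))"

definition degree :: "('e \<Rightarrow> 'v set) \<Rightarrow> 'e set \<Rightarrow> 'v \<Rightarrow> nat" where
  "degree inc X v = (\<Sum>e\<in>{e\<in>X. v \<in> inc e}. if card (inc e) = 1 then 2 else 1)"

definition cubic :: "'v set \<Rightarrow> 'e set \<Rightarrow> ('e \<Rightarrow> 'v set) \<Rightarrow> bool" where
  "cubic V E inc \<longleftrightarrow> multigraph V E inc \<and> (\<forall>v\<in>V. degree inc E v = 3)"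

definition is_join :: "'v set \<Rightarrow> 'e set \<Rightarrow> ('e \<Rightarrow> 'v set) \<Rightarrow> 'e set \<Rightarrow> bool" where
  "is_join V E inc J \<longleftrightarrow> J \<subseteq> E \<and>
     (\<forall>v\<in>V. even (degree inc E v) \<longleftrightarrow> even (degree inc J v))"

definition mult3 :: "'e set \<Rightarrow> 'e set \<Rightarrow> 'e set \<Rightarrow> 'e \<Rightarrow> nat" where
  "mult3 J1 J2 J3 e = (if e \<in> J1 then 1 else 0) + (if e \<in> J2 then 1 else 0)
                      + (if e \<in> J3 then 1 else 0)"

definition edge_class :: "'e set \<Rightarrow> 'e set \<Rightarrow> 'e set \<Rightarrow> 'e set \<Rightarrow> nat \<Rightarrow> 'e set" where
  "edge_class E J1 J2 J3 i = {e\<in>E. mult3 J1 J2 J3 e = i}"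

text \<open>Edge-induced subgraph G[X]: vertex set = vertices incident with X, edge set X.\<close>
definition induced_verts :: "('e \<Rightarrow> 'v set) \<Rightarrow> 'e set \<Rightarrow> 'v set" where
  "induced_verts inc X = \<Union> (inc ` X)"

definition is_cycle :: "'v set \<Rightarrow> 'e set \<Rightarrow> ('e \<Rightarrow> 'v set) \<Rightarrow> bool" where
  "is_cycle W X inc \<longleftrightarrow> (\<forall>v\<in>W. even (degree inc X v))"

definition weak_core_edges :: "'e set \<Rightarrow> 'e set \<Rightarrow> 'e set \<Rightarrow> 'e set \<Rightarrow> 'e set" where
  "weak_core_edges E J1 J2 J3 =
     edge_class E J1 J2 J3 0 \<union> edge_class E J1 J2 J3 2 \<union> edge_class E J1 J2 J3 3"

end

theory Submission
  imports Defs
begin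

theorem proposition2p2:
  fixes V :: "'v set" and E :: "'e set" and inc :: "'e \<Rightarrow> 'v set"
    and J1 J2 J3 :: "'e set"
  assumes "cubic V E inc"
    and "is_join V E inc J1" and "is_join V E inc J2" and "is_join V E inc J3"
  shows "let X = edge_class E J1 J2 J3 0 \<union> edge_class E J1 J2 J3 2
         in X = {} \<or> is_cycle (induced_verts inc X) X inc"
proof -
  define X where "X = edge_class E J1 J2 J3 0 \<union> edge_class E J1 J2 J3 2"
  define w where "w = (\<lambda>e. if card (inc e) = 1 then 2 else 1::nat)"
  have mg: "multigraph V E inc" and deg3: "\<forall>v\<in>V. degree inc E v = 3"
    using assms(1) unfolding cubic_def by auto
  have finE: "finite E" using mg unfolding multigraph_def by auto
  have XE: "X \<subseteq> E" unfolding X_def edge_class_def by auto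
  have J: "J1 \<subseteq> E" "J2 \<subseteq> E" "J3 \<subseteq> E" using assms(2-4) unfolding is_join_def by auto
  have ev: "even (degree inc X v)" if vV: "v \<in> V" for v
  proof -
    define A where "A = {e\<in>E. v \<in> inc e}"
    have finA: "finite A" using finE unfolding A_def by auto
    have dS: "degree inc S v = (\<Sum>e\<in>A. if e \<in> S then w e else 0)" if "S \<subseteq> E" for S
    proof -
      have "{e\<in>S. v \<in> inc e} = {e\<in>A. e \<in> S}" using that unfolding A_def by auto
      have "degree inc S v = sum w {e\<in>S. v \<in> inc e}" unfolding degree_def w_def by simp
      also have "\<dots> = sum w {e\<in>A. e \<in> S}" using \<open>{e\<in>S. v \<in> inc e} = {e\<in>A. e \<in> S}\<close> by simp
      also have "\<dots> = (\<Sum>e\<in>A. if e \<in> S then w e else 0)" by (rule sum.inter_filter[OF finA])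
      finally show ?thesis .
    qed
    have dE: "degree inc E v = sum w A" unfolding degree_def w_def A_def by simp
    have oddJ: "odd (degree inc Ji v)" if "is_join V E inc Ji" for Ji
      using that vV deg3 unfolding is_join_def by auto
    have sum3: "degree inc J1 v + degree inc J2 v + degree inc J3 v
        = (\<Sum>e\<in>A. w e * mult3 J1 J2 J3 e)"
      unfolding dS[OF J(1)] dS[OF J(2)] dS[OF J(3)] sum.distrib[symmetric]
      by (rule sum.cong) (auto simp: mult3_def)
    have oddS: "odd (\<Sum>e\<in>A. w e * mult3 J1 J2 J3 e)"
      using sum3 oddJ assms(2-4) by (metis odd_add)
    have pe: "(w e * mult3 J1 J2 J3 e + (if e \<in> X then w e else 0)) mod 2 = w e mod 2"
      if "e \<in> A" for e
    proof -
      have eE: "e \<in> E" using that unfolding A_def by auto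
      have m: "mult3 J1 J2 J3 e \<le> 3" unfolding mult3_def by auto
      have xi: "e \<in> X \<longleftrightarrow> mult3 J1 J2 J3 e = 0 \<or> mult3 J1 J2 J3 e = 2"
        using eE unfolding X_def edge_class_def by auto
      show ?thesis
      proof (cases "mult3 J1 J2 J3 e")
        case 0 then show ?thesis using xi by simp
      next
        case (Suc k)
        then have "k = 0 \<or> k = 1 \<or> k = 2" using m by auto
        then show ?thesis using xi Suc by (auto simp: algebra_simps; presburger)
      qed
    qed
    have "(\<Sum>e\<in>A. w e * mult3 J1 J2 J3 e + (if e \<in> X then w e else 0)) mod 2
        = (\<Sum>e\<in>A. w e) mod 2"
    proof -
      have "(\<Sum>e\<in>A. w e * mult3 J1 J2 J3 e + (if e \<in> X then w e else 0)) mod 2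
          = (\<Sum>e\<in>A. (w e * mult3 J1 J2 J3 e + (if e \<in> X then w e else 0)) mod 2) mod 2"
        by (simp add: mod_sum_eq)
      also have "\<dots> = (\<Sum>e\<in>A. w e mod 2) mod 2"
        using pe by (simp cong: sum.cong)
      also have "\<dots> = (\<Sum>e\<in>A. w e) mod 2" by (simp add: mod_sum_eq)
      finally show ?thesis .
    qed
    then have "((\<Sum>e\<in>A. w e * mult3 J1 J2 J3 e) + degree inc X v) mod 2 = 3 mod 2"
      using dS[OF XE] dE deg3 vV by (simp add: sum.distrib)
    then have "odd ((\<Sum>e\<in>A. w e * mult3 J1 J2 J3 e) + degree inc X v)"
      by (simp only: odd_iff_mod_2_eq_one) simp
    then show ?thesis using oddS by simp
  qed
  have "is_cycle (induced_verts inc X) X inc"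
    unfolding is_cycle_def
  proof
    fix v assume "v \<in> induced_verts inc X"
    then obtain e where "e \<in> X" "v \<in> inc e" unfolding induced_verts_def by auto
    then have "v \<in> V" using XE mg unfolding multigraph_def by auto
    then show "even (degree inc X v)" by (rule ev)
  qed
  then show ?thesis unfolding X_def[symmetric] Let_def by simp
qed

end
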